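(* Let $\mathbb{K}$ be a field of characteristic $0$, let $F(n)$ be a holonomic sequence over $\mathbb{K}$, and let $L=\sum_{i=0}^{J}a_i(n)\sigma^i\in\operatorname{ann}F(n)$ be a nonzero operator. Then there exists a nonzero polynomial $p(n)\in\mathbb{K}[n]$ such that $p(n)F(n)$ is summable and \[\deg p(n)\le \deg L + C_L,\] where $\deg L$ is the degree of $L$ and $C_L$ is the continued zero index of $L$.
   Context: $\sigma$ is the shift operator, $\sigma(F(n))=F(n+1)$, and for $L=\sum_{i=0}^J a_i(n)\sigma^i\in\mathbb{K}[n][\sigma]$, $L(F(n))=\sum_{i=0}^J a_i(n)F(n+i)$. The annihilator is $\operatorname{ann}F(n)=\{L\in\mathbb{K}[n][\sigma]: L(F(n))=0\}$; $F$ is holonomic if $\operatorname{ann}F(n)\ne\{0\}$. The order $\operatorname{ord}F(n)$ is the minimal order $J$ of a nonzero element of $\operatorname{ann}F(n)$. A holonomic sequence $G(n)$ of order $J$ is summable if $G(n)=\Delta\big(\sum_{i=0}^{J-1}u_i(n)G(n+i)\big)$ for some rational functions $u_i(n)\in\mathbb{K}(n)$, where $\Delta=\sigma-1$. The adjoint of $L$ acts on polynomials by $L^*(x(n))=\sum_{i=0}^J a_i(n-i)x(n-i)$. Degree of $L$: put $b_k(n)=\sum_{j=k}^{J}\binom{j}{k}a_{J-j}(n+j-J)$ for $0\le k\le J$, and $\deg L=\max_{0\le k\le J}\{\deg b_k(n)-k\}$. Continued zero index $C_L$: if $L^*(1)\neq0$ then $C_L=0$; if $L^*(1)=0$ then $C_L$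 is the positive integer with $L^*(n^{C_L})\neq 0$ and $L^*(n^i)=0$ for $0\le i\le C_L-1$. *)

theory Defs
  imports "HOL-Computational_Algebra.Polynomial"
begin

text \<open>A sequence is a function nat => 'k. An operator L = sum_{i=0}^J a_i(n) sigma^i
  is represented by its coefficient polynomials a :: nat => 'k poly together with J.\<close>

definition apply_op :: "(nat \<Rightarrow> 'k::comm_ring_1 poly) \<Rightarrow> nat \<Rightarrow> (nat \<Rightarrow> 'k) \<Rightarrow> nat \<Rightarrow> 'k" where
  "apply_op a J F n = (\<Sum>i\<le>J. poly (a i) (of_nat n) * F (n + i))"

definition op_nonzero :: "(nat \<Rightarrow> 'k::zero poly) \<Rightarrow> nat \<Rightarrow> bool" where
  "op_nonzero a J = (\<exists>i\<le>J. a i \<noteq> 0)"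

definition annihilates :: "(nat \<Rightarrow> 'k::comm_ring_1 poly) \<Rightarrow> nat \<Rightarrow> (nat \<Rightarrow> 'k) \<Rightarrow> bool" where
  "annihilates a J F = (\<forall>n. apply_op a J F n = 0)"

definition holonomic :: "(nat \<Rightarrow> 'k::comm_ring_1) \<Rightarrow> bool" where
  "holonomic F = (\<exists>a J. op_nonzero a J \<and> annihilates a J F)"

definition seq_ord :: "(nat \<Rightarrow> 'k::comm_ring_1) \<Rightarrow> nat" where
  "seq_ord F = (LEAST J. \<exists>a. op_nonzero a J \<and> annihilates a J F)"

text \<open>Summability: G(n) = Delta(sum_{i<J} u_i(n) G(n+i)), J = ord G, with rational
  functions u_i = q_i / d (common denominator d \<noteq> 0); the identity is required at every
  n where all u_i(n) and u_i(n+1) are defined.\<close>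
definition summable_seq :: "(nat \<Rightarrow> 'k::field) \<Rightarrow> bool" where
  "summable_seq G = (holonomic G \<and>
     (\<exists>(q :: nat \<Rightarrow> 'k poly) (d :: 'k poly). d \<noteq> 0 \<and>
        (\<forall>n. poly d (of_nat n) \<noteq> 0 \<and> poly d (of_nat (n + 1)) \<noteq> 0 \<longrightarrow>
           G n = (\<Sum>i<seq_ord G. poly (q i) (of_nat (n + 1)) / poly d (of_nat (n + 1)) * G (n + 1 + i))
               - (\<Sum>i<seq_ord G. poly (q i) (of_nat n) / poly d (of_nat n) * G (n + i)))))"

definition op_order :: "(nat \<Rightarrow> 'k::zero poly) \<Rightarrow> nat \<Rightarrow> nat" where
  "op_order a J = (GREATEST i. i \<le> J \<and> a i \<noteq> 0)"

definition b_coeff :: "(nat \<Rightarrow> 'k::comm_ring_1 poly) \<Rightarrow> nat \<Rightarrow> nat \<Rightarrow> 'k poly" where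
  "b_coeff a J k = (let J' = op_order a J in
     (\<Sum>j=k..J'. of_nat (j choose k) * pcompose (a (J' - j)) [: of_int (int j - int J'), 1 :]))"

definition op_deg :: "(nat \<Rightarrow> 'k::comm_ring_1 poly) \<Rightarrow> nat \<Rightarrow> int" where
  "op_deg a J = Max {int (degree (b_coeff a J k)) - int k | k. k \<le> op_order a J \<and> b_coeff a J k \<noteq> 0}"

definition adjoint :: "(nat \<Rightarrow> 'k::comm_ring_1 poly) \<Rightarrow> nat \<Rightarrow> 'k poly \<Rightarrow> 'k poly" where
  "adjoint a J x = (\<Sum>i\<le>J. pcompose (a i * x) [: - of_nat i, 1 :])"

definition cont_zero_index :: "(nat \<Rightarrow> 'k::comm_ring_1 poly) \<Rightarrow> nat \<Rightarrow> nat" where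
  "cont_zero_index a J = (LEAST c. adjoint a J (monom 1 c) \<noteq> 0)"

end

theory Submission
  imports Defs
begin

lemma ev_poly_nz:
  fixes p :: "'k::field_char_0 poly"
  assumes "p \<noteq> 0"
  shows "eventually (\<lambda>n. poly p (of_nat n) \<noteq> 0) sequentially"
proof -
  have eq: "{n::nat. poly p (of_nat n) = 0} = (of_nat :: nat \<Rightarrow> 'k) -` {x. poly p x = 0}" by auto
  have fin: "finite {n::nat. poly p (of_nat n) = 0}"
    unfolding eq by (rule finite_vimageI[OF poly_roots_finite[OF assms] inj_of_nat])
  have "eventually (\<lambda>n. n \<notin> {n::nat. poly p (of_nat n) = 0}) cofinite"
    using fin by (simp add: eventually_cofinite)
  then show ?thesis unfolding cofinite_eq_sequentially by simp
qed

definition erat :: "(nat \<Rightarrow> 'k::field_char_0) \<Rightarrow> bool" where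
  "erat u = (\<exists>q d. d \<noteq> 0 \<and> eventually (\<lambda>n. u n = poly q (of_nat n) / poly d (of_nat n)) sequentially)"

lemma erat_poly: "erat (\<lambda>n. poly q (of_nat n + y0))"
  unfolding erat_def
  by (rule exI[of _ "pcompose q [:y0, 1:]"], rule exI[of _ 1]) (simp add: poly_pcompose add.commute)

lemma erat_const: "erat (\<lambda>n. c)"
  using erat_poly[of "[:c:]" 0] by simp

lemma erat_cong: assumes "erat u" "eventually (\<lambda>n. v n = u n) sequentially" shows "erat v"
proof -
  obtain q d where d: "d \<noteq> 0" and
    e: "eventually (\<lambda>n. u n = poly q (of_nat n) / poly d (of_nat n)) sequentially"
    using assms(1) unfolding erat_def by blast
  have "eventually (\<lambda>n. v n = poly q (of_nat n) / poly d (of_nat n)) sequentially"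
    using e assms(2) by eventually_elim simp
  then show ?thesis unfolding erat_def using d by blast
qed

lemma erat_add: assumes "erat u" "erat v" shows "erat (\<lambda>n. u n + v n)"
proof -
  obtain q1 d1 q2 d2 where d: "d1 \<noteq> 0" "d2 \<noteq> 0" and
    e1: "eventually (\<lambda>n. u n = poly q1 (of_nat n) / poly d1 (of_nat n)) sequentially" and
    e2: "eventually (\<lambda>n. v n = poly q2 (of_nat n) / poly d2 (of_nat n)) sequentially"
    using assms unfolding erat_def by blast
  have "eventually (\<lambda>n. u n + v n = poly (q1 * d2 + q2 * d1) (of_nat n) / poly (d1 * d2) (of_nat n)) sequentially"
    using e1 e2 ev_poly_nz[OF d(1)] ev_poly_nz[OF d(2)]
    by eventually_elim (simp add: add_frac_eq)
  moreover have "d1 * d2 \<noteq> 0" using d by simp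
  ultimately show ?thesis unfolding erat_def by (intro exI[of _ "q1 * d2 + q2 * d1"] exI[of _ "d1*d2"]) simp
qed

lemma erat_mult: assumes "erat u" "erat v" shows "erat (\<lambda>n. u n * v n)"
proof -
  obtain q1 d1 q2 d2 where d: "d1 \<noteq> 0" "d2 \<noteq> 0" and
    e1: "eventually (\<lambda>n. u n = poly q1 (of_nat n) / poly d1 (of_nat n)) sequentially" and
    e2: "eventually (\<lambda>n. v n = poly q2 (of_nat n) / poly d2 (of_nat n)) sequentially"
    using assms unfolding erat_def by blast
  have "eventually (\<lambda>n. u n * v n = poly (q1 * q2) (of_nat n) / poly (d1 * d2) (of_nat n)) sequentially"
    using e1 e2 by eventually_elim simp
  moreover have "d1 * d2 \<noteq> 0" using d by simp
  ultimately show ?thesis unfolding erat_def by (intro exI[of _ "q1 * q2"] exI[of _ "d1*d2"]) simp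
qed

lemma erat_inverse: assumes "erat u" shows "erat (\<lambda>n. inverse (u n))"
proof -
  obtain q d where d: "d \<noteq> 0" and
    e: "eventually (\<lambda>n. u n = poly q (of_nat n) / poly d (of_nat n)) sequentially"
    using assms unfolding erat_def by blast
  show ?thesis
  proof (cases "q = 0")
    case True
    then show ?thesis using e by (intro erat_cong[OF erat_const[of 0]]) (auto elim: eventually_mono)
  next
    case False
    have "eventually (\<lambda>n. inverse (u n) = poly d (of_nat n) / poly q (of_nat n)) sequentially"
      using e by eventually_elim simp
    then show ?thesis unfolding erat_def using False by blast
  qed
qed

lemma erat_minus: assumes "erat u" shows "erat (\<lambda>n. - u n)"
proof -
  have "erat (\<lambda>n. (-1) * u n)" by (rule erat_mult[OF erat_const assms])
  then show ?thesis by simp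
qed

lemma erat_divide: assumes "erat u" "erat v" shows "erat (\<lambda>n. u n / v n)"
proof -
  have "erat (\<lambda>n. u n * inverse (v n))" by (rule erat_mult[OF assms(1) erat_inverse[OF assms(2)]])
  then show ?thesis by (simp add: divide_inverse)
qed

lemma erat_zero: "erat (\<lambda>n. 0)" by (rule erat_const)

lemma erat_sum: "finite A \<Longrightarrow> (\<And>i. i \<in> A \<Longrightarrow> erat (u i)) \<Longrightarrow> erat (\<lambda>n. \<Sum>i\<in>A. u i n)"
proof (induction A rule: finite_induct)
  case empty
  then show ?case using erat_zero by simp
next
  case (insert x F)
  have "erat (\<lambda>n. u x n + (\<Sum>i\<in>F. u i n))"
    by (rule erat_add) (use insert in auto)
  then show ?case using insert by simp
qed

lemma erat_shift: assumes "erat u" shows "erat (\<lambda>n. u (n + 1))"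
proof -
  obtain q d where d: "d \<noteq> 0" and
    e: "eventually (\<lambda>n. u n = poly q (of_nat n) / poly d (of_nat n)) sequentially"
    using assms unfolding erat_def by blast
  have "eventually (\<lambda>n. u (n+1) = poly (pcompose q [:1,1:]) (of_nat n) / poly (pcompose d [:1,1:]) (of_nat n)) sequentially"
  proof -
    have e1: "eventually (\<lambda>n. u (n+1) = poly q (of_nat (n+1)) / poly d (of_nat (n+1))) sequentially"
      by (rule iffD2[OF eventually_sequentially_seg[where k=1] e])
    then show ?thesis by eventually_elim (simp add: poly_pcompose add.commute)
  qed
  moreover have "pcompose d [:1,1:] \<noteq> 0" using d pcompose_eq_0 by fastforce
  ultimately show ?thesis unfolding erat_def by blast
qed

lemma erat_common:
  fixes k :: nat
  assumes "\<And>l. l < k \<Longrightarrow> erat (w l)"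
  shows "\<exists>Q D. D \<noteq> 0 \<and> eventually (\<lambda>n. \<forall>l<k. w l n = poly (Q l) (of_nat n) / poly D (of_nat n)) sequentially"
  using assms
proof (induction k)
  case 0
  show ?case by (rule exI[of _ "\<lambda>_. 0"], rule exI[of _ 1]) simp
next
  case (Suc k)
  have "\<exists>Q D. D \<noteq> 0 \<and> eventually (\<lambda>n. \<forall>l<k. w l n = poly (Q l) (of_nat n) / poly D (of_nat n)) sequentially"
    by (rule Suc.IH) (simp add: Suc.prems)
  then obtain Q D where D: "D \<noteq> 0" and eQ: "eventually (\<lambda>n. \<forall>l<k. w l n = poly (Q l) (of_nat n) / poly D (of_nat n)) sequentially"
    by blast
  obtain q d where d: "d \<noteq> 0" and
    e: "eventually (\<lambda>n. w k n = poly q (of_nat n) / poly d (of_nat n)) sequentially"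
    using Suc.prems[of k] unfolding erat_def by blast
  have "eventually (\<lambda>n. \<forall>l<Suc k. w l n = poly ((\<lambda>l. if l < k then Q l * d else q * D) l) (of_nat n) / poly (D * d) (of_nat n)) sequentially"
    using eQ e ev_poly_nz[OF D] ev_poly_nz[OF d]
  proof eventually_elim
    case (elim n)
    show ?case
    proof (intro allI impI)
      fix l assume "l < Suc k"
      then consider "l < k" | "l = k" by linarith
      then show "w l n = poly (if l < k then Q l * d else q * D) (of_nat n) / poly (D * d) (of_nat n)"
      proof cases
        case 1 then show ?thesis using elim by simp
      next
        case 2 then show ?thesis using elim by simp
      qed
    qed
  qed
  moreover have "D * d \<noteq> 0" using D d by simp
  ultimately show ?case by (intro exI[of _ "\<lambda>l. if l < k then Q l * d else q * D"] exI[of _ "D*d"]) simp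
qed

definition expr :: "nat \<Rightarrow> (nat \<Rightarrow> 'k::field_char_0) \<Rightarrow> (nat \<Rightarrow> 'k) \<Rightarrow> bool" where
  "expr k G H = (\<exists>w. (\<forall>l. erat (w l)) \<and> eventually (\<lambda>n. H n = (\<Sum>l<k. w l n * G (n+l))) sequentially)"

lemma expr_cong: assumes "expr k G H" "eventually (\<lambda>n. H' n = H n) sequentially" shows "expr k G H'"
proof -
  obtain w where w: "\<forall>l. erat (w l)" and e: "eventually (\<lambda>n. H n = (\<Sum>l<k. w l n * G (n+l))) sequentially"
    using assms(1) unfolding expr_def by blast
  have "eventually (\<lambda>n. H' n = (\<Sum>l<k. w l n * G (n+l))) sequentially"
    using e assms(2) by eventually_elim simp
  then show ?thesis unfolding expr_def using w by blast
qed

lemma expr_add: assumes "expr k G H1" "expr k G H2" shows "expr k G (\<lambda>n. H1 n + H2 n)"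
proof -
  obtain w1 where w1: "\<forall>l. erat (w1 l)" and e1: "eventually (\<lambda>n. H1 n = (\<Sum>l<k. w1 l n * G (n+l))) sequentially"
    using assms(1) unfolding expr_def by blast
  obtain w2 where w2: "\<forall>l. erat (w2 l)" and e2: "eventually (\<lambda>n. H2 n = (\<Sum>l<k. w2 l n * G (n+l))) sequentially"
    using assms(2) unfolding expr_def by blast
  have "eventually (\<lambda>n. H1 n + H2 n = (\<Sum>l<k. (\<lambda>l n. w1 l n + w2 l n) l n * G (n+l))) sequentially"
    using e1 e2 by eventually_elim (simp add: sum.distrib distrib_right)
  moreover have "\<forall>l. erat ((\<lambda>l n. w1 l n + w2 l n) l)" using w1 w2 erat_add by blast
  ultimately show ?thesis unfolding expr_def by (intro exI[of _ "\<lambda>l n. w1 l n + w2 l n"]) simp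
qed

lemma expr_scale: assumes "erat u" "expr k G H" shows "expr k G (\<lambda>n. u n * H n)"
proof -
  obtain w where w: "\<forall>l. erat (w l)" and e: "eventually (\<lambda>n. H n = (\<Sum>l<k. w l n * G (n+l))) sequentially"
    using assms(2) unfolding expr_def by blast
  have "eventually (\<lambda>n. u n * H n = (\<Sum>l<k. (\<lambda>l n. u n * w l n) l n * G (n+l))) sequentially"
    using e by eventually_elim (simp add: sum_distrib_left mult.assoc)
  moreover have "\<forall>l. erat ((\<lambda>l n. u n * w l n) l)" using w assms(1) erat_mult by blast
  ultimately show ?thesis unfolding expr_def by (intro exI[of _ "\<lambda>l n. u n * w l n"]) simp
qed

lemma expr_zero: "expr k G (\<lambda>n. 0)"
  unfolding expr_def by (intro exI[of _ "\<lambda>l n. 0"]) (simp add: erat_zero)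

lemma expr_sum: "finite A \<Longrightarrow> (\<And>i. i \<in> A \<Longrightarrow> expr k G (H i)) \<Longrightarrow> expr k G (\<lambda>n. \<Sum>i\<in>A. H i n)"
proof (induction A rule: finite_induct)
  case empty
  then show ?case using expr_zero by simp
next
  case (insert x F)
  have "expr k G (\<lambda>n. H x n + (\<Sum>i\<in>F. H i n))"
    by (rule expr_add) (use insert in auto)
  then show ?case using insert by simp
qed

lemma expr_base: assumes "m < k" shows "expr k G (\<lambda>n. G (n+m))"
proof -
  have "\<forall>l. erat ((\<lambda>l n. if l = m then 1 else 0) l)"
    by (auto intro: erat_const)
  moreover have "\<forall>n. G (n+m) = (\<Sum>l<k. (\<lambda>l n. if l = m then 1 else 0) l n * G (n+l))"
  proof
    fix n
    have "(\<Sum>l<k. (\<lambda>l n. if l = m then 1 else 0) l n * G (n+l)) = (\<Sum>l<k. if l = m then G (n+l) else 0)"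
      by (rule sum.cong) auto
    also have "\<dots> = G (n+m)" using assms by (simp add: sum.delta')
    finally show "G (n+m) = (\<Sum>l<k. (\<lambda>l n. if l = m then 1 else 0) l n * G (n+l))" by simp
  qed
  ultimately show ?thesis unfolding expr_def by (intro exI[of _ "\<lambda>l n. if l = m then 1 else 0"]) simp
qed

lemma ev_shift_nz:
  fixes p :: "'k::field_char_0 poly"
  assumes "p \<noteq> 0"
  shows "eventually (\<lambda>n. poly p (of_nat (n + s)) \<noteq> 0) sequentially"
  by (rule iffD2[OF eventually_sequentially_seg ev_poly_nz[OF assms]])

lemma expr_all:
  fixes G :: "nat \<Rightarrow> 'k::field_char_0"
  assumes ann: "annihilates c k G" and ck: "c k \<noteq> 0"
  shows "expr k G (\<lambda>n. G (n+m))"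
proof (induction m rule: less_induct)
  case (less m)
  show ?case
  proof (cases "m < k")
    case True
    then show ?thesis by (rule expr_base)
  next
    case False
    define s where "s = m - k"
    have ms: "m = s + k" using False s_def by simp
    have IH: "\<And>i. i < k \<Longrightarrow> expr k G (\<lambda>n. G (n + (s + i)))"
      using less ms by simp
    have "expr k G (\<lambda>n. \<Sum>i<k. (- (poly (c i) (of_nat n + of_nat s) / poly (c k) (of_nat n + of_nat s))) * G (n + (s + i)))"
    proof (rule expr_sum)
      show "finite {..<k}" by simp
    next
      fix i assume i: "i \<in> {..<k}"
      have "erat (\<lambda>n. - (poly (c i) (of_nat n + of_nat s) / poly (c k) (of_nat n + of_nat s)))"
        by (intro erat_minus erat_divide erat_poly)
      then show "expr k G (\<lambda>n. (- (poly (c i) (of_nat n + of_nat s) / poly (c k) (of_nat n + of_nat s))) * G (n + (s + i)))"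
        by (rule expr_scale) (use IH i in simp)
    qed
    moreover have "eventually (\<lambda>n. G (n+m) = (\<Sum>i<k. (- (poly (c i) (of_nat n + of_nat s) / poly (c k) (of_nat n + of_nat s))) * G (n + (s + i)))) sequentially"
      using ev_shift_nz[OF ck, of s]
    proof eventually_elim
      case (elim n)
      have "apply_op c k G (n + s) = 0" using ann unfolding annihilates_def by blast
      then have "(\<Sum>i<k. poly (c i) (of_nat (n+s)) * G (n + s + i)) + poly (c k) (of_nat (n+s)) * G (n+s+k) = 0"
        unfolding apply_op_def by (simp add: lessThan_Suc_atMost[symmetric])
      then have "G (n+m) = - (\<Sum>i<k. poly (c i) (of_nat (n+s)) * G (n + s + i)) / poly (c k) (of_nat (n+s))"
        using elim ms by (simp add: eq_neg_iff_add_eq_0 field_simps add.assoc)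
      then show ?case by (simp add: sum_divide_distrib sum_negf[symmetric] add.assoc)
    qed
    ultimately show ?thesis by (rule expr_cong)
  qed
qed

lemma poly_adjoint:
  "poly (adjoint a J x) y = (\<Sum>i\<le>J. poly (a i) (y - of_nat i) * poly x (y - of_nat i))"
  by (simp add: adjoint_def poly_sum poly_pcompose)

definition lagH :: "(nat \<Rightarrow> 'k::comm_ring_1 poly) \<Rightarrow> nat \<Rightarrow> 'k poly \<Rightarrow> (nat \<Rightarrow> 'k) \<Rightarrow> nat \<Rightarrow> 'k" where
  "lagH a J x F n = (\<Sum>i\<le>J. \<Sum>j<i. poly (a i) (of_nat n - of_nat (Suc j)) * poly x (of_nat n - of_nat (Suc j)) * F (n + i - Suc j))"

lemma lagrange:
  fixes F :: "nat \<Rightarrow> 'k::comm_ring_1"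
  assumes "annihilates a J F"
  shows "poly (adjoint a J x) (of_nat n) * F n = lagH a J x F n - lagH a J x F (n+1)"
proof -
  define g where "g i j = poly (a i) (of_nat n - of_nat j) * poly x (of_nat n - of_nat j) * F (n + i - j)" for i j
  have h1: "(\<Sum>j<i. poly (a i) (of_nat (n+1) - of_nat (Suc j)) * poly x (of_nat (n+1) - of_nat (Suc j)) * F (n + 1 + i - Suc j)) = (\<Sum>j<i. g i j)" for i
    by (rule sum.cong) (auto simp: g_def)
  have h0: "(\<Sum>j<i. poly (a i) (of_nat n - of_nat (Suc j)) * poly x (of_nat n - of_nat (Suc j)) * F (n + i - Suc j)) = (\<Sum>j<i. g i (Suc j))" for i
    by (rule sum.cong) (auto simp: g_def)
  have "lagH a J x F (n+1) - lagH a J x F n = (\<Sum>i\<le>J. (\<Sum>j<i. g i j - g i (Suc j)))"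
    unfolding lagH_def h1 h0 by (simp add: sum_subtractf)
  also have "\<dots> = (\<Sum>i\<le>J. g i 0 - g i i)"
    by (simp add: sum_lessThan_telescope')
  also have "\<dots> = poly x (of_nat n) * apply_op a J F n - poly (adjoint a J x) (of_nat n) * F n"
    unfolding apply_op_def poly_adjoint g_def
    by (simp add: sum_subtractf sum_distrib_left sum_distrib_right algebra_simps)
  also have "apply_op a J F n = 0" using assms unfolding annihilates_def by blast
  finally show ?thesis by (simp add: algebra_simps)
qed

definition dlt :: "'k::comm_ring_1 poly \<Rightarrow> 'k poly" where
  "dlt x = pcompose x [:1,1:] - x"

lemma poly_dlt: "poly (dlt x) y = poly x (y + 1) - poly x y"
  by (simp add: dlt_def poly_pcompose add.commute)

lemma pascal_sum:
  fixes f :: "nat \<Rightarrow> 'a::comm_ring_1"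
  shows "(\<Sum>k\<le>Suc j. of_nat (Suc j choose k) * f k) =
         (\<Sum>k\<le>j. of_nat (j choose k) * f (Suc k)) + (\<Sum>k\<le>j. of_nat (j choose k) * f k)"
proof -
  have A: "(\<Sum>k\<le>Suc j. of_nat (Suc j choose k) * f k) = f 0 + (\<Sum>k\<le>j. of_nat (Suc j choose Suc k) * f (Suc k))"
    by (subst sum.atMost_Suc_shift) simp
  have B: "(\<Sum>k\<le>j. of_nat (Suc j choose Suc k) * f (Suc k)) = (\<Sum>k\<le>j. of_nat (j choose k) * f (Suc k)) + (\<Sum>k\<le>j. of_nat (j choose Suc k) * f (Suc k))"
    by (simp add: sum.distrib distrib_right)
  have C: "f 0 + (\<Sum>k\<le>j. of_nat (j choose Suc k) * f (Suc k)) = (\<Sum>k\<le>Suc j. of_nat (j choose k) * f k)"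
    by (subst sum.atMost_Suc_shift) simp
  have D: "(\<Sum>k\<le>Suc j. of_nat (j choose k) * f k) = (\<Sum>k\<le>j. of_nat (j choose k) * f k)"
    by (simp add: binomial_eq_0)
  show ?thesis using A B C D by (simp add: algebra_simps)
qed

lemma shift_binom:
  fixes x :: "'k::comm_ring_1 poly"
  shows "poly x (y + of_nat j) = (\<Sum>k\<le>j. of_nat (j choose k) * poly ((dlt ^^ k) x) y)"
proof (induction j arbitrary: y)
  case 0
  then show ?case by simp
next
  case (Suc j)
  have "poly x (y + of_nat (Suc j)) = poly x ((y + 1) + of_nat j)" by (simp add: algebra_simps)
  also have "\<dots> = (\<Sum>k\<le>j. of_nat (j choose k) * poly ((dlt ^^ k) x) (y + 1))" by (rule Suc.IH)
  also have "\<dots> = (\<Sum>k\<le>j. of_nat (j choose k) * (poly ((dlt ^^ Suc k) x) y + poly ((dlt ^^ k) x) y))"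
    by (rule sum.cong) (simp_all add: poly_dlt)
  also have "\<dots> = (\<Sum>k\<le>j. of_nat (j choose k) * poly ((dlt ^^ Suc k) x) y) + (\<Sum>k\<le>j. of_nat (j choose k) * poly ((dlt ^^ k) x) y)"
    by (simp add: sum.distrib distrib_left)
  also have "\<dots> = (\<Sum>k\<le>Suc j. of_nat (Suc j choose k) * poly ((dlt ^^ k) x) y)"
    by (rule pascal_sum[symmetric])
  finally show ?case .
qed

lemma dlt_const: fixes x :: "'k::field poly" assumes "degree x = 0" shows "dlt x = 0"
proof -
  obtain c where "x = [:c:]" using assms degree_eq_zeroE by blast
  then show ?thesis by (simp add: dlt_def)
qed

lemma degree_dlt: fixes x :: "'k::field poly" shows "degree (dlt x) \<le> degree x - 1"
proof (cases "degree x = 0")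
  case True
  then show ?thesis using dlt_const[OF True] by simp
next
  case False
  have d1: "degree [:1, 1::'k:] = 1" by simp
  have dc: "degree (pcompose x [:1,1:]) = degree x" by (simp add: degree_pcompose)
  have lc: "lead_coeff (pcompose x [:1,1:]) = lead_coeff x" using lead_coeff_comp[of "[:1,1::'k:]" x] by simp
  have le: "degree (dlt x) \<le> degree x" unfolding dlt_def by (rule degree_diff_le) (simp_all add: dc)
  have c0: "coeff (dlt x) (degree x) = 0" unfolding dlt_def using lc dc by simp
  have "degree (dlt x) \<noteq> degree x"
  proof
    assume eq: "degree (dlt x) = degree x"
    then have "dlt x = 0" using c0 by (metis leading_coeff_0_iff)
    then show False using eq False by simp
  qed
  then show ?thesis using le by simp
qed

lemma dlt_zero: "dlt 0 = 0" by (simp add: dlt_def)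

lemma funpow_dlt_zero: "(dlt ^^ m) 0 = 0"
  by (induction m) (simp_all add: dlt_zero)

lemma degree_dlt_pow: fixes x :: "'k::field poly" shows "degree ((dlt ^^ k) x) \<le> degree x - k"
proof (induction k)
  case 0
  then show ?case by simp
next
  case (Suc k)
  have "degree ((dlt ^^ Suc k) x) \<le> degree ((dlt ^^ k) x) - 1" using degree_dlt by simp
  then show ?case using Suc by linarith
qed

lemma dlt_pow_vanish: fixes x :: "'k::field poly" assumes "degree x < k" shows "(dlt ^^ k) x = 0"
proof -
  have "degree ((dlt ^^ degree x) x) = 0" using degree_dlt_pow[of "degree x" x] by simp
  then have z: "(dlt ^^ Suc (degree x)) x = 0" using dlt_const by simp
  have "k = (k - Suc (degree x)) + Suc (degree x)" using assms by simp
  then have "(dlt ^^ k) x = (dlt ^^ (k - Suc (degree x))) ((dlt ^^ Suc (degree x)) x)"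
    by (metis funpow_add o_apply)
  then show ?thesis using z funpow_dlt_zero by simp
qed

lemma op_order_props:
  assumes "op_nonzero a J"
  shows "op_order a J \<le> J" "a (op_order a J) \<noteq> 0" "\<And>i. i \<le> J \<Longrightarrow> a i \<noteq> 0 \<Longrightarrow> i \<le> op_order a J"
proof -
  obtain i0 where i0: "i0 \<le> J" "a i0 \<noteq> 0" using assms unfolding op_nonzero_def by blast
  have G: "(\<lambda>i. i \<le> J \<and> a i \<noteq> 0) (op_order a J)"
    unfolding op_order_def by (rule GreatestI_nat[of _ i0 J]) (use i0 in auto)
  then show "op_order a J \<le> J" "a (op_order a J) \<noteq> 0" by auto
  show "\<And>i. i \<le> J \<Longrightarrow> a i \<noteq> 0 \<Longrightarrow> i \<le> op_order a J"
    unfolding op_order_def by (rule Greatest_le_nat[of _ _ J]) auto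
qed

lemma adjoint_b:
  fixes a :: "nat \<Rightarrow> 'k::field_char_0 poly"
  assumes nz: "op_nonzero a J"
  shows "poly (adjoint a J x) y = (\<Sum>k\<le>op_order a J. poly (b_coeff a J k) y * poly ((dlt ^^ k) x) (y - of_nat (op_order a J)))"
proof -
  define J' where "J' = op_order a J"
  define z where "z = y - of_nat J'"
  note P = op_order_props[OF nz, folded J'_def]
  have "poly (adjoint a J x) y = (\<Sum>i\<le>J'. poly (a i) (y - of_nat i) * poly x (y - of_nat i))"
    unfolding poly_adjoint
  proof (rule sum.mono_neutral_right)
    show "\<forall>i\<in>{..J} - {..J'}. poly (a i) (y - of_nat i) * poly x (y - of_nat i) = 0"
      using P(3) by force
  qed (use P(1) in auto)
  also have "\<dots> = (\<Sum>i<Suc J'. poly (a (J' - i)) (y - of_nat (J' - i)) * poly x (y - of_nat (J' - i)))"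
    unfolding lessThan_Suc_atMost[symmetric]
    using sum.nat_diff_reindex[of "\<lambda>i. poly (a i) (y - of_nat i) * poly x (y - of_nat i)" "Suc J'"]
    by simp
  also have "\<dots> = (\<Sum>j\<le>J'. poly (a (J' - j)) (z + of_nat j) * poly x (z + of_nat j))"
    unfolding lessThan_Suc_atMost
    by (rule sum.cong) (auto simp: z_def of_nat_diff algebra_simps)
  also have "\<dots> = (\<Sum>j\<le>J'. \<Sum>k\<le>J'. of_nat (j choose k) * poly (a (J' - j)) (z + of_nat j) * poly ((dlt ^^ k) x) z)"
  proof (rule sum.cong)
    fix j assume j: "j \<in> {..J'}"
    have "poly x (z + of_nat j) = (\<Sum>k\<le>j. of_nat (j choose k) * poly ((dlt ^^ k) x) z)"
      by (rule shift_binom)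
    also have "\<dots> = (\<Sum>k\<le>J'. of_nat (j choose k) * poly ((dlt ^^ k) x) z)"
      by (rule sum.mono_neutral_left) (use j in auto)
    finally show "poly (a (J' - j)) (z + of_nat j) * poly x (z + of_nat j) =
      (\<Sum>k\<le>J'. of_nat (j choose k) * poly (a (J' - j)) (z + of_nat j) * poly ((dlt ^^ k) x) z)"
      by (simp add: sum_distrib_left mult_ac)
  qed simp
  also have "\<dots> = (\<Sum>k\<le>J'. \<Sum>j\<le>J'. of_nat (j choose k) * poly (a (J' - j)) (z + of_nat j) * poly ((dlt ^^ k) x) z)"
    by (rule sum.swap)
  also have "\<dots> = (\<Sum>k\<le>J'. poly (b_coeff a J k) y * poly ((dlt ^^ k) x) z)"
  proof (rule sum.cong)
    fix k assume k: "k \<in> {..J'}"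
    have "poly (b_coeff a J k) y = (\<Sum>j=k..J'. of_nat (j choose k) * poly (a (J' - j)) (z + of_nat j))"
      unfolding b_coeff_def Let_def J'_def[symmetric] poly_sum
      by (rule sum.cong) (auto simp: poly_pcompose z_def algebra_simps)
    also have "\<dots> = (\<Sum>j\<le>J'. of_nat (j choose k) * poly (a (J' - j)) (z + of_nat j))"
      by (rule sum.mono_neutral_left) auto
    finally show "(\<Sum>j\<le>J'. of_nat (j choose k) * poly (a (J' - j)) (z + of_nat j) * poly ((dlt ^^ k) x) z) =
       poly (b_coeff a J k) y * poly ((dlt ^^ k) x) z"
      by (simp add: sum_distrib_right)
  qed simp
  finally show ?thesis unfolding z_def J'_def .
qed

lemma adjoint_b_poly:
  fixes a :: "nat \<Rightarrow> 'k::field_char_0 poly"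
  assumes nz: "op_nonzero a J"
  shows "adjoint a J x = (\<Sum>k\<le>op_order a J. b_coeff a J k * pcompose ((dlt ^^ k) x) [:- of_nat (op_order a J), 1:])"
proof -
  have "poly (adjoint a J x) = poly (\<Sum>k\<le>op_order a J. b_coeff a J k * pcompose ((dlt ^^ k) x) [:- of_nat (op_order a J), 1:])"
    by (rule ext) (simp add: adjoint_b[OF nz] poly_sum poly_pcompose algebra_simps)
  then show ?thesis using poly_eq_poly_eq_iff by blast
qed

lemma deg_bound:
  fixes a :: "nat \<Rightarrow> 'k::field_char_0 poly"
  assumes nz: "op_nonzero a J" and P0: "adjoint a J x \<noteq> 0"
  shows "int (degree (adjoint a J x)) \<le> op_deg a J + int (degree x)"
proof -
  define J' where "J' = op_order a J"
  define t where "t k = b_coeff a J k * pcompose ((dlt ^^ k) x) [:- of_nat J', 1:]" for k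
  have Peq: "adjoint a J x = (\<Sum>k\<le>J'. t k)" unfolding t_def J'_def by (rule adjoint_b_poly[OF nz])
  define M where "M = {int (degree (b_coeff a J k)) - int k | k. k \<le> op_order a J \<and> b_coeff a J k \<noteq> 0}"
  have finM: "finite M"
  proof -
    have "M \<subseteq> (\<lambda>k. int (degree (b_coeff a J k)) - int k) ` {..op_order a J}" unfolding M_def by auto
    then show ?thesis by (rule finite_subset) simp
  qed
  have opd: "op_deg a J = Max M" unfolding op_deg_def M_def ..
  have tb: "int (degree (t k)) \<le> op_deg a J + int (degree x)" if k: "k \<le> J'" "t k \<noteq> 0" for k
  proof -
    have b: "b_coeff a J k \<noteq> 0" and dx: "(dlt ^^ k) x \<noteq> 0" using k(2) unfolding t_def by auto
    have kd: "k \<le> degree x" using dx dlt_pow_vanish[of x k] by linarith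
    have "degree (t k) = degree (b_coeff a J k) + degree ((dlt ^^ k) x)"
      unfolding t_def using b dx by (simp add: degree_mult_eq degree_pcompose pcompose_eq_0_iff)
    also have "\<dots> \<le> degree (b_coeff a J k) + (degree x - k)" using degree_dlt_pow[of k x] by simp
    finally have "int (degree (t k)) \<le> (int (degree (b_coeff a J k)) - int k) + int (degree x)" using kd by linarith
    moreover have "int (degree (b_coeff a J k)) - int k \<in> M" unfolding M_def using k b J'_def by auto
    then have "int (degree (b_coeff a J k)) - int k \<le> op_deg a J" unfolding opd using finM by simp
    ultimately show ?thesis by linarith
  qed
  have "\<exists>k0. k0 \<le> J' \<and> t k0 \<noteq> 0"
  proof (rule ccontr)
    assume "\<not> (\<exists>k0. k0 \<le> J' \<and> t k0 \<noteq> 0)"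
    then have "\<forall>k\<in>{..J'}. t k = 0" by auto
    then have "(\<Sum>k\<le>J'. t k) = 0" by simp
    then show False using P0 Peq by simp
  qed
  then obtain k0 where k0: "k0 \<le> J'" "t k0 \<noteq> 0" by blast
  have nn: "0 \<le> op_deg a J + int (degree x)" using tb[OF k0] by linarith
  have "degree (\<Sum>k\<le>J'. t k) \<le> nat (op_deg a J + int (degree x))"
  proof (rule degree_sum_le)
    fix k assume "k \<in> {..J'}"
    then show "degree (t k) \<le> nat (op_deg a J + int (degree x))"
      using tb[of k] nn by (cases "t k = 0") auto
  qed simp
  then show ?thesis using Peq nn by simp
qed

lemma adjoint_all_zero:
  fixes a :: "nat \<Rightarrow> 'k::field_char_0 poly"
  assumes "\<forall>c. adjoint a J (monom 1 c) = 0"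
  shows "poly (adjoint a J x) y = 0"
proof -
  have "poly (adjoint a J x) y = (\<Sum>i\<le>J. poly (a i) (y - of_nat i) * (\<Sum>c\<le>degree x. coeff x c * (y - of_nat i) ^ c))"
    unfolding poly_adjoint by (simp add: poly_altdef)
  also have "\<dots> = (\<Sum>c\<le>degree x. coeff x c * (\<Sum>i\<le>J. poly (a i) (y - of_nat i) * poly (monom 1 c) (y - of_nat i)))"
    by (simp add: sum_distrib_left sum_distrib_right poly_monom mult_ac sum.swap[of _ "{..J}"])
  also have "\<dots> = 0" using assms by (simp add: poly_adjoint[symmetric])
  finally show ?thesis .
qed

lemma adjoint_exists:
  fixes a :: "nat \<Rightarrow> 'k::field_char_0 poly"
  assumes nz: "op_nonzero a J"
  shows "\<exists>c. adjoint a J (monom 1 c) \<noteq> 0"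
proof (rule ccontr)
  assume "\<not> ?thesis"
  then have Z: "\<forall>c. adjoint a J (monom 1 c) = 0" by simp
  obtain i0 where i0: "i0 \<le> J" "a i0 \<noteq> 0" using nz unfolding op_nonzero_def by blast
  have root: "poly (a i0) (of_nat N) = 0" for N
  proof -
    define y :: 'k where "y = of_nat N + of_nat i0"
    define x where "x = (\<Prod>i\<in>{..J} - {i0}. [: -(y - of_nat i), 1 :])"
    have px: "poly x z = (\<Prod>i\<in>{..J} - {i0}. z - (y - of_nat i))" for z
      unfolding x_def poly_prod by (rule prod.cong) (simp_all add: algebra_simps)
    have "poly (adjoint a J x) y = (\<Sum>i\<le>J. poly (a i) (y - of_nat i) * poly x (y - of_nat i))"
      by (rule poly_adjoint)
    also have "\<dots> = poly (a i0) (y - of_nat i0) * poly x (y - of_nat i0) +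
        (\<Sum>i\<in>{..J} - {i0}. poly (a i) (y - of_nat i) * poly x (y - of_nat i))"
      using i0 by (subst sum.remove[of _ i0]) auto
    also have "(\<Sum>i\<in>{..J} - {i0}. poly (a i) (y - of_nat i) * poly x (y - of_nat i)) = 0"
    proof (rule sum.neutral, rule ballI)
      fix i assume i: "i \<in> {..J} - {i0}"
      have "poly x (y - of_nat i) = 0" unfolding px
        by (rule prod_zero) (use i in auto)
      then show "poly (a i) (y - of_nat i) * poly x (y - of_nat i) = 0" by simp
    qed
    finally have E: "poly (a i0) (y - of_nat i0) * poly x (y - of_nat i0) = 0"
      using adjoint_all_zero[OF Z] by simp
    have "poly x (y - of_nat i0) = (\<Prod>i\<in>{..J} - {i0}. of_nat i - of_nat i0)"
      unfolding px by (rule prod.cong) auto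
    moreover have "(\<Prod>i\<in>{..J} - {i0}. (of_nat i - of_nat i0 :: 'k)) \<noteq> 0"
      by (subst prod_zero_iff) auto
    ultimately have "poly x (y - of_nat i0) \<noteq> 0" by simp
    with E have "poly (a i0) (y - of_nat i0) = 0" by simp
    then show ?thesis unfolding y_def by simp
  qed
  have "range (of_nat :: nat \<Rightarrow> 'k) \<subseteq> {z. poly (a i0) z = 0}" using root by auto
  moreover have "infinite (range (of_nat :: nat \<Rightarrow> 'k))"
    using range_inj_infinite[OF inj_of_nat] by blast
  ultimately have "infinite {z. poly (a i0) z = 0}" using finite_subset by blast
  then show False using poly_roots_finite[OF i0(2)] by blast
qed

lemma holo_mult:
  fixes F :: "nat \<Rightarrow> 'k::field_char_0"
  assumes nz: "op_nonzero a J" and ann: "annihilates a J F" and p: "p \<noteq> 0"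
  shows "holonomic (\<lambda>n. poly p (of_nat n) * F n)"
proof -
  define b where "b i = a i * (\<Prod>j\<in>{..J} - {i}. pcompose p [:of_nat j, 1:])" for i
  have pc: "pcompose p [:of_nat j, 1:] \<noteq> 0" for j
    using p pcompose_eq_0_iff[of "[:of_nat j, 1::'k:]" p] by simp
  have "op_nonzero b J"
  proof -
    obtain i0 where i0: "i0 \<le> J" "a i0 \<noteq> 0" using nz unfolding op_nonzero_def by blast
    have "(\<Prod>j\<in>{..J} - {i0}. pcompose p [:of_nat j, 1:]) \<noteq> 0"
      using pc by (subst prod_zero_iff) auto
    then have "b i0 \<noteq> 0" using i0 unfolding b_def by simp
    then show ?thesis unfolding op_nonzero_def using i0 by blast
  qed
  moreover have "annihilates b J (\<lambda>n. poly p (of_nat n) * F n)"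
    unfolding annihilates_def
  proof
    fix n
    define Q where "Q = (\<Prod>j\<le>J. poly p (of_nat n + of_nat j))"
    have "apply_op b J (\<lambda>n. poly p (of_nat n) * F n) n =
       (\<Sum>i\<le>J. Q * (poly (a i) (of_nat n) * F (n + i)))"
      unfolding apply_op_def
    proof (rule sum.cong)
      fix i assume i: "i \<in> {..J}"
      have "Q = poly p (of_nat n + of_nat i) * (\<Prod>j\<in>{..J} - {i}. poly p (of_nat n + of_nat j))"
        unfolding Q_def using i by (subst prod.remove[of _ i]) auto
      then show "poly (b i) (of_nat n) * (poly p (of_nat (n + i)) * F (n + i)) = Q * (poly (a i) (of_nat n) * F (n + i))"
        unfolding b_def by (simp add: poly_prod poly_pcompose add.commute mult_ac)
    qed simp
    also have "\<dots> = Q * apply_op a J F n" unfolding apply_op_def by (simp add: sum_distrib_left)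
    also have "apply_op a J F n = 0" using ann unfolding annihilates_def by blast
    finally show "apply_op b J (\<lambda>n. poly p (of_nat n) * F n) n = 0" by simp
  qed
  ultimately show ?thesis unfolding holonomic_def by blast
qed

lemma min_op:
  fixes G :: "nat \<Rightarrow> 'k::field_char_0"
  assumes "holonomic G"
  obtains c where "annihilates c (seq_ord G) G" "c (seq_ord G) \<noteq> 0"
proof -
  define k where "k = seq_ord G"
  have ex: "\<exists>c. op_nonzero c k \<and> annihilates c k G"
    unfolding k_def seq_ord_def by (rule LeastI_ex) (use assms in \<open>auto simp: holonomic_def\<close>)
  then obtain c where c: "op_nonzero c k" "annihilates c k G" by blast
  have "c k \<noteq> 0"
  proof
    assume ck: "c k = 0"
    obtain i where i: "i \<le> k" "c i \<noteq> 0" using c(1) unfolding op_nonzero_def by blast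
    with ck have ik: "i \<le> k - 1" "k > 0" by (auto simp: le_less)
    have "op_nonzero c (k - 1)" unfolding op_nonzero_def using ik i by blast
    moreover have "annihilates c (k - 1) G"
      unfolding annihilates_def
    proof
      fix n
      have "apply_op c k G n = apply_op c (k - 1) G n"
      proof -
        have "{..k} = insert k {..k-1}" using ik(2) by auto
        then show ?thesis unfolding apply_op_def using ck ik(2) by (simp add: sum.insert_if)
      qed
      then show "apply_op c (k - 1) G n = 0" using c(2) unfolding annihilates_def by simp
    qed
    ultimately have "k \<le> k - 1" unfolding k_def seq_ord_def by (intro Least_le) blast
    then show False using ik by simp
  qed
  then show ?thesis using that c(2) unfolding k_def by blast
qed

theorem theorem2p1:
  fixes F :: "nat \<Rightarrow> 'k::field_char_0"
    and a :: "nat \<Rightarrow> 'k poly" and J :: nat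
  assumes "holonomic F"
    and "op_nonzero a J"
    and "annihilates a J F"
  shows "\<exists>p :: 'k poly. p \<noteq> 0 \<and> summable_seq (\<lambda>n. poly p (of_nat n) * F n) \<and>
           int (degree p) \<le> op_deg a J + int (cont_zero_index a J)"
proof -
  define C where "C = cont_zero_index a J"
  have pC: "adjoint a J (monom 1 C) \<noteq> 0"
    unfolding C_def cont_zero_index_def by (rule LeastI_ex) (rule adjoint_exists[OF assms(2)])
  define p where "p = adjoint a J (monom 1 C)"
  have p0: "p \<noteq> 0" using pC p_def by simp
  have deg: "int (degree p) \<le> op_deg a J + int C"
    using deg_bound[OF assms(2) pC] unfolding p_def by (simp add: degree_monom_eq)
  define G where "G n = poly p (of_nat n) * F n" for n
  have holG: "holonomic G" unfolding G_def by (rule holo_mult[OF assms(2,3) p0])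
  define k where "k = seq_ord G"
  obtain c where ann: "annihilates c k G" and ck: "c k \<noteq> 0"
    using min_op[OF holG] unfolding k_def by blast
  define Hh where "Hh n = - lagH a J (monom 1 C) F n" for n
  have Gid: "G n = Hh (n+1) - Hh n" for n
    unfolding G_def Hh_def p_def using lagrange[OF assms(3), of "monom 1 C" n] by simp
  have exF: "expr k G (\<lambda>n. F (n + m))" for m
  proof (rule expr_cong)
    show "expr k G (\<lambda>n. inverse (poly p (of_nat n + of_nat m)) * G (n + m))"
      by (rule expr_scale[OF erat_inverse[OF erat_poly] expr_all[OF ann ck]])
    show "\<forall>\<^sub>F n in sequentially. F (n + m) = inverse (poly p (of_nat n + of_nat m)) * G (n + m)"
      using ev_shift_nz[OF p0, of m] by eventually_elim (simp add: G_def)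
  qed
  have exH: "expr k G Hh"
  proof (rule expr_cong)
    show "expr k G (\<lambda>n. (\<Sum>i\<le>J. \<Sum>j<i. (- (poly (a i) (of_nat n + - of_nat (Suc j)) * poly (monom 1 C) (of_nat n + - of_nat (Suc j)))) * F (n + (i - Suc j))))"
    proof (rule expr_sum, simp, rule expr_sum, simp)
      fix i j
      show "expr k G (\<lambda>n. (- (poly (a i) (of_nat n + - of_nat (Suc j)) * poly (monom 1 C) (of_nat n + - of_nat (Suc j)))) * F (n + (i - Suc j)))"
        by (rule expr_scale[OF erat_minus[OF erat_mult[OF erat_poly erat_poly]] exF])
    qed
    show "\<forall>\<^sub>F n in sequentially. Hh n = (\<Sum>i\<le>J. \<Sum>j<i. (- (poly (a i) (of_nat n + - of_nat (Suc j)) * poly (monom 1 C) (of_nat n + - of_nat (Suc j)))) * F (n + (i - Suc j)))"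
    proof (rule always_eventually, rule allI)
      fix n
      show "Hh n = (\<Sum>i\<le>J. \<Sum>j<i. (- (poly (a i) (of_nat n + - of_nat (Suc j)) * poly (monom 1 C) (of_nat n + - of_nat (Suc j)))) * F (n + (i - Suc j)))"
        unfolding Hh_def lagH_def
        by (simp add: sum_negf[symmetric] del: of_nat_Suc)
    qed
  qed
  then obtain w where w: "\<forall>l. erat (w l)" and ew: "eventually (\<lambda>n. Hh n = (\<Sum>l<k. w l n * G (n+l))) sequentially"
    unfolding expr_def by blast
  obtain Q D where D: "D \<noteq> 0" and eQ: "eventually (\<lambda>n. \<forall>l<k. w l n = poly (Q l) (of_nat n) / poly D (of_nat n)) sequentially"
    using erat_common[of k w] w by blast
  from eventually_conj[OF ew eQ] obtain N where N: "\<And>n. n \<ge> N \<Longrightarrow> Hh n = (\<Sum>l<k. w l n * G (n+l)) \<and> (\<forall>l<k. w l n = poly (Q l) (of_nat n) / poly D (of_nat n))"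
    unfolding eventually_sequentially by blast
  define R :: "'k poly" where "R = (\<Prod>t<N. [:- of_nat t, 1:])"
  have pR: "poly R (of_nat n) = (\<Prod>t<N. of_nat n - of_nat t)" for n
    unfolding R_def poly_prod by simp
  have R0: "R \<noteq> 0" unfolding R_def by (subst prod_zero_iff) auto
  have RN: "n \<ge> N" if "poly R (of_nat n) \<noteq> 0" for n
  proof (rule ccontr)
    assume "\<not> n \<ge> N"
    then have "(\<Prod>t<N. (of_nat n - of_nat t :: 'k)) = 0" by (intro prod_zero) auto
    then show False using that pR by simp
  qed
  define d where "d = D * R"
  define q where "q l = Q l * R" for l
  have d0: "d \<noteq> 0" unfolding d_def using D R0 by simp
  have qd: "poly (q l) (of_nat m) / poly d (of_nat m) = w l m" if "poly d (of_nat m) \<noteq> 0" "l < k" for l m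
  proof -
    have Rm: "poly R (of_nat m) \<noteq> 0" using that unfolding d_def by simp
    then have "m \<ge> N" by (rule RN)
    then have "w l m = poly (Q l) (of_nat m) / poly D (of_nat m)" using N that by blast
    then show ?thesis using Rm unfolding q_def d_def by simp
  qed
  have summ: "\<forall>n. poly d (of_nat n) \<noteq> 0 \<and> poly d (of_nat (n + 1)) \<noteq> 0 \<longrightarrow>
           G n = (\<Sum>i<k. poly (q i) (of_nat (n + 1)) / poly d (of_nat (n + 1)) * G (n + 1 + i))
               - (\<Sum>i<k. poly (q i) (of_nat n) / poly d (of_nat n) * G (n + i))"
  proof (intro allI impI)
    fix n assume nd: "poly d (of_nat n) \<noteq> 0 \<and> poly d (of_nat (n + 1)) \<noteq> 0"
    have nN: "n \<ge> N" using nd RN unfolding d_def by auto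
    have "G n = Hh (n+1) - Hh n" by (rule Gid)
    also have "Hh (n+1) = (\<Sum>l<k. w l (n+1) * G (n+1+l))" using N[of "n+1"] nN by simp
    also have "Hh n = (\<Sum>l<k. w l n * G (n+l))" using N[of n] nN by simp
    also have "(\<Sum>l<k. w l (n+1) * G (n+1+l)) = (\<Sum>i<k. poly (q i) (of_nat (n + 1)) / poly d (of_nat (n + 1)) * G (n + 1 + i))"
    proof (rule sum.cong[OF refl])
      fix l assume "l \<in> {..<k}"
      then have "poly (q l) (of_nat (n + 1)) / poly d (of_nat (n + 1)) = w l (n+1)"
        using qd[of "n+1" l] nd by blast
      then show "w l (n+1) * G (n+1+l) = poly (q l) (of_nat (n + 1)) / poly d (of_nat (n + 1)) * G (n + 1 + l)" by simp
    qed
    also have "(\<Sum>l<k. w l n * G (n+l)) = (\<Sum>i<k. poly (q i) (of_nat n) / poly d (of_nat n) * G (n + i))"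
    proof (rule sum.cong[OF refl])
      fix l assume "l \<in> {..<k}"
      then have "poly (q l) (of_nat n) / poly d (of_nat n) = w l n"
        using qd[of n l] nd by blast
      then show "w l n * G (n+l) = poly (q l) (of_nat n) / poly d (of_nat n) * G (n + l)" by simp
    qed
    finally show "G n = (\<Sum>i<k. poly (q i) (of_nat (n + 1)) / poly d (of_nat (n + 1)) * G (n + 1 + i))
               - (\<Sum>i<k. poly (q i) (of_nat n) / poly d (of_nat n) * G (n + i))" .
  qed
  have "summable_seq G"
    unfolding summable_seq_def k_def[symmetric] using holG d0 summ by blast
  then show ?thesis using p0 deg unfolding G_def C_def by blast
qed

end
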